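(* Let $0<q<1$ and let $T$ be an optimal tree for $\mathrm{TDGD}(q)$. For each signature $s$, let $L(s)$ be the depth of a level of $T$ containing at least half of the $s+1$ leaves of signature $s$ (such a level exists since these leaves lie in at most two consecutive levels; ties broken by any fixed rule). Let $s\ge 0$ and let $\ell\ge 2$ be an integer with $s\ge 2^{\ell+2}-1$, and suppose $s'>s$ is a signature with $L(s')=L(s)+\ell$. Then $$\frac{\ell-2}{\log_2 q^{-1}}\le s'-s\le \frac{\ell+1}{\log_2 q^{-1}}.$$
   Context: $\mathcal{A}=\{(i,j): i,j\in\mathbb{Z}_{\ge 0}\}$; $\mathrm{TDGD}(q)$ is the distribution $P(i,j)=(1-q)^2q^{i+j}$ on $\mathcal{A}$. A prefix code for $\mathcal{A}$ is a full binary tree whose leaves are in bijection with $\mathcal{A}$; codeword length = depth of leaf; a tree is optimal for $\mathrm{TDGD}(q)$ if it minimizes expected codeword length. The signature of $(i,j)$ is $i+j$; there are exactly $s+1$ symbols of signature $s$. *)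

theory Defs
  imports "HOL-Analysis.Analysis" "HOL-Library.Sublist"
begin

definition TDGD :: "real \<Rightarrow> nat \<times> nat \<Rightarrow> real" where
  "TDGD q = (\<lambda>(i, j). (1 - q)^2 * q^(i + j))"

text \<open>A prefix code for the alphabet of pairs, given as a full binary tree whose
  leaves are in bijection with the alphabet: the codeword of a symbol is the path
  (list of bits) from the root to its leaf.  The nodes of the tree are the prefixes
  of codewords; leaves are exactly the codewords (injective and prefix-free);
  fullness: every internal node (strict prefix of a codeword) has both children.\<close>
definition is_prefix_code_tree :: "(nat \<times> nat \<Rightarrow> bool list) \<Rightarrow> bool" where
  "is_prefix_code_tree c \<longleftrightarrow>
     inj c \<and>
     (\<forall>x y. x \<noteq> y \<longrightarrow> \<not> prefix (c x) (c y)) \<and>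
     (\<forall>w b. (\<exists>x. strict_prefix w (c x)) \<longrightarrow> (\<exists>x. prefix (w @ [b]) (c x)))"

definition expected_length :: "real \<Rightarrow> (nat \<times> nat \<Rightarrow> bool list) \<Rightarrow> ennreal" where
  "expected_length q c = (\<Sum>\<^sub>\<infinity> a\<in>UNIV. ennreal (TDGD q a * real (length (c a))))"

definition optimal_tree :: "real \<Rightarrow> (nat \<times> nat \<Rightarrow> bool list) \<Rightarrow> bool" where
  "optimal_tree q c \<longleftrightarrow> is_prefix_code_tree c \<and>
     (\<forall>c'. is_prefix_code_tree c' \<longrightarrow> expected_length q c \<le> expected_length q c')"

definition majority_level :: "(nat \<times> nat \<Rightarrow> bool list) \<Rightarrow> (nat \<Rightarrow> nat) \<Rightarrow> bool" where
  "majority_level c L \<longleftrightarrow>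
     (\<forall>s. 2 * card {(i, j). i + j = s \<and> length (c (i, j)) = L s} \<ge> s + 1)"

end

theory Submission
  imports Defs "HOL-Real_Asymp.Real_Asymp"
begin


lemma ennreal_infsum_real:
  fixes f :: "'a \<Rightarrow> real"
  assumes "f summable_on A" "\<And>x. x \<in> A \<Longrightarrow> f x \<ge> 0"
  shows "infsum (\<lambda>x. ennreal (f x)) A = ennreal (infsum f A)"
proof -
  have "\<And>F. \<lbrakk>finite F; F \<subseteq> A\<rbrakk> \<Longrightarrow> sum (ennreal \<circ> f) F = ennreal (sum f F)"
    by (metis (mono_tags, lifting) comp_def assms(2) subsetD sum.cong sum_ennreal)
  then have "infsum (ennreal \<circ> f) A = ennreal (infsum f A)"
    by (simp add: infsum_comm_additive_general assms(1))
  then show ?thesis by (simp add: comp_def)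
qed

lemma summable_lin_geom:
  fixes q :: real assumes "0 < q" "q < 1"
  shows "summable (\<lambda>n. real (n+1) * q ^ n)"
proof -
  have "conv_radius (\<lambda>n. real (n+1)) = ereal 1"
  proof (rule conv_radius_ratio_limit_nonzero)
    have "(\<lambda>n. real (n+1) / real (Suc n + 1)) \<longlonglongrightarrow> 1"
      by real_asymp
    then show "(\<lambda>n. norm (real (n+1)) / norm (real (Suc n + 1))) \<longlonglongrightarrow> 1"
      by simp
  qed auto
  then show ?thesis using assms by (intro summable_in_conv_radius) auto
qed

lemma summable_on_lin_geom:
  fixes q :: real assumes "0 < q" "q < 1"
  shows "(\<lambda>n. real (n+1) * q ^ n) summable_on UNIV"
  using summable_lin_geom[OF assms] assms
  by (subst summable_on_UNIV_nonneg_real_iff) auto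

lemma summable_on_geom:
  fixes q :: real assumes "0 < q" "q < 1"
  shows "(\<lambda>n::nat. q ^ n) summable_on UNIV"
  using assms
  by (subst summable_on_UNIV_nonneg_real_iff) auto

lemma summable_on_prod_nonneg:
  fixes f g :: "nat \<Rightarrow> real"
  assumes "f summable_on UNIV" "g summable_on UNIV" "\<And>n. f n \<ge> 0" "\<And>n. g n \<ge> 0"
  shows "(\<lambda>(i,j). f i * g j) summable_on UNIV"
proof -
  have "(\<lambda>(i,j). f i * g j) summable_on Sigma UNIV (\<lambda>_. UNIV)"
  proof (rule summable_on_SigmaI[where g = "\<lambda>i. f i * infsum g UNIV"])
    fix i :: nat
    show "((\<lambda>j. case (i, j) of (i, j) \<Rightarrow> f i * g j) has_sum f i * infsum g UNIV) UNIV"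
      using has_sum_cmult_right[OF has_sum_infsum[OF assms(2)], of "f i"] by simp
  next
    show "(\<lambda>i. f i * infsum g UNIV) summable_on UNIV"
      using summable_on_cmult_left[OF assms(1)] by simp
  qed (use assms in auto)
  then show ?thesis by simp
qed

definition c0 :: "nat \<times> nat \<Rightarrow> bool list" where
  "c0 = (\<lambda>(i,j). replicate i True @ False # replicate j True @ [False])"

lemma rep_eq: "replicate i True @ False # r = replicate i' True @ False # r' \<Longrightarrow> i = i' \<and> r = r'"
proof (induction i arbitrary: i')
  case 0 then show ?case by (cases i') auto
next
  case (Suc i) then show ?case by (cases i') auto
qed

lemma rep_prefix: "prefix (replicate i True @ False # r) (replicate i' True @ False # r') \<Longrightarrow> i = i' \<and> prefix r r'"
proof (induction i arbitrary: i')
  case 0 then show ?case by (cases i') auto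
next
  case (Suc i) then show ?case by (cases i') auto
qed

lemma rep_prefix2: "prefix w (replicate i True @ False # r) \<Longrightarrow>
   (\<exists>k\<le>i. w = replicate k True) \<or> (\<exists>w'. w = replicate i True @ False # w' \<and> prefix w' r)"
proof (induction i arbitrary: w)
  case 0 then show ?case by (cases w) auto
next
  case (Suc i)
  show ?case
  proof (cases w)
    case Nil then show ?thesis by (intro disjI1 exI[of _ 0]) auto
  next
    case (Cons x w1)
    then have x: "x = True" and p: "prefix w1 (replicate i True @ False # r)" using Suc.prems by auto
    from Suc.IH[OF p] show ?thesis
    proof
      assume "\<exists>k\<le>i. w1 = replicate k True"
      then obtain k where "k \<le> i" "w1 = replicate k True" by blast
      then show ?thesis using Cons x by (intro disjI1 exI[of _ "Suc k"]) auto
    next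
      assume "\<exists>w'. w1 = replicate i True @ False # w' \<and> prefix w' r"
      then show ?thesis using Cons x by auto
    qed
  qed
qed

lemma prefix_rep: "prefix w (replicate n x) \<Longrightarrow> \<exists>k\<le>n. w = replicate k x"
proof (induction n arbitrary: w)
  case 0 then show ?case by simp
next
  case (Suc n) show ?case
  proof (cases w)
    case Nil then show ?thesis by (intro exI[of _ 0]) auto
  next
    case (Cons y w1) then have "y = x" "prefix w1 (replicate n x)" using Suc.prems by auto
    with Suc.IH obtain k where "k \<le> n" "w1 = replicate k x" by blast
    then show ?thesis using Cons \<open>y = x\<close> by (intro exI[of _ "Suc k"]) auto
  qed
qed

lemma c0_inj: "inj c0"
  unfolding inj_def c0_def by (auto dest!: rep_eq)

lemma c0_pf: "x \<noteq> y \<Longrightarrow> \<not> prefix (c0 x) (c0 y)"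
proof
  assume "x \<noteq> y" "prefix (c0 x) (c0 y)"
  obtain i j i' j' where xy: "x = (i,j)" "y = (i',j')" by (cases x, cases y)
  from \<open>prefix (c0 x) (c0 y)\<close> have "i = i'" and p: "prefix (replicate j True @ [False]) (replicate j' True @ [False])"
    unfolding xy c0_def by (auto dest!: rep_prefix)
  from p have "j = j'" using rep_prefix[of j "[]" j' "[]"] by simp
  then show False using \<open>i = i'\<close> \<open>x \<noteq> y\<close> xy by simp
qed

lemma c0_full: "strict_prefix w (c0 x) \<Longrightarrow> \<exists>y. prefix (w @ [b]) (c0 y)"
proof -
  assume sp: "strict_prefix w (c0 x)"
  obtain i j where xy: "x = (i,j)" by (cases x)
  from sp have "prefix w (replicate i True @ False # (replicate j True @ [False]))"
    unfolding xy c0_def by (auto simp: strict_prefix_def)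
  from rep_prefix2[OF this] show ?thesis
  proof
    assume "\<exists>k\<le>i. w = replicate k True"
    then obtain k where w: "w = replicate k True" by blast
    show ?thesis
    proof (cases b)
      case True then show ?thesis unfolding w c0_def
        by (intro exI[of _ "(Suc k, 0)"]) (simp add: replicate_append_same[symmetric])
    next
      case False then show ?thesis unfolding w c0_def
        by (intro exI[of _ "(k, 0)"]) simp
    qed
  next
    assume "\<exists>w'. w = replicate i True @ False # w' \<and> prefix w' (replicate j True @ [False])"
    then obtain w' where w: "w = replicate i True @ False # w'" and p: "prefix w' (replicate j True @ [False])" by blast
    have ne: "w' \<noteq> replicate j True @ [False]" using sp w unfolding xy c0_def by auto
    have "prefix w' (replicate j True)" using p ne by auto
    from prefix_rep[OF this] obtain k where k: "k \<le> j" "w' = replicate k True" by blast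
    show ?thesis
    proof (cases b)
      case True then show ?thesis unfolding w k c0_def
        by (intro exI[of _ "(i, Suc k)"]) (simp add: replicate_append_same[symmetric])
    next
      case False then show ?thesis unfolding w k c0_def
        by (intro exI[of _ "(i, k)"]) simp
    qed
  qed
qed

lemma c0_tree: "is_prefix_code_tree c0"
  unfolding is_prefix_code_tree_def using c0_inj c0_pf c0_full by blast

lemma c0_len: "length (c0 (i,j)) = i + j + 2"
  by (simp add: c0_def)

lemma c0_finite:
  fixes q :: real assumes "0 < q" "q < 1"
  shows "expected_length q c0 < \<infinity>"
proof -
  define f where "f = (\<lambda>n::nat. real (n+1) * q ^ n)"
  define g where "g = (\<lambda>n::nat. q ^ n)"
  have s1: "(\<lambda>(i,j). f i * g j) summable_on UNIV"
    using summable_on_prod_nonneg[of f g] summable_on_lin_geom[OF assms] summable_on_geom[OF assms] assms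
    unfolding f_def g_def by auto
  have s2: "(\<lambda>(i,j). g i * f j) summable_on UNIV"
    using summable_on_prod_nonneg[of g f] summable_on_lin_geom[OF assms] summable_on_geom[OF assms] assms
    unfolding f_def g_def by auto
  have s3: "(\<lambda>a. (1-q)^2 * ((\<lambda>(i,j). f i * g j) a + (\<lambda>(i,j). g i * f j) a)) summable_on UNIV"
    by (intro summable_on_cmult_right summable_on_add s1 s2)
  have eq: "(\<lambda>a. TDGD q a * real (length (c0 a))) = (\<lambda>a. (1-q)^2 * ((\<lambda>(i,j). f i * g j) a + (\<lambda>(i,j). g i * f j) a))"
    by (auto simp: TDGD_def c0_len f_def g_def algebra_simps power_add)
  have s4: "(\<lambda>a. TDGD q a * real (length (c0 a))) summable_on UNIV"
    using s3 eq by simp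
  have nn: "\<And>a. TDGD q a * real (length (c0 a)) \<ge> 0"
    using assms by (auto simp: TDGD_def)
  show ?thesis unfolding expected_length_def
    using ennreal_infsum_real[OF s4] nn by simp
qed




definition under :: "('a \<Rightarrow> bool list) \<Rightarrow> bool list \<Rightarrow> 'a set" where
  "under c w = {a. prefix w (c a)}"

definition incomp :: "bool list \<Rightarrow> bool list \<Rightarrow> bool" where
  "incomp u v \<longleftrightarrow> \<not> prefix u v \<and> \<not> prefix v u"

definition sf :: "bool list \<Rightarrow> bool list \<Rightarrow> bool list \<Rightarrow> bool list" where
  "sf u v w = (if prefix u w then v @ drop (length u) w else if prefix v w then u @ drop (length v) w else w)"

lemma prefix_app_cases: "prefix x (y @ z) \<Longrightarrow> prefix x y \<or> prefix y x"
  using prefix_same_cases[of x "y @ z" y] by auto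

lemma incomp_sym: "incomp u v \<Longrightarrow> incomp v u"
  by (auto simp: incomp_def)

lemma not_both: "incomp u v \<Longrightarrow> prefix u w \<Longrightarrow> prefix v w \<Longrightarrow> False"
  using prefix_same_cases[of u w v] by (auto simp: incomp_def)

lemma not_app: "incomp u v \<Longrightarrow> prefix u (v @ r) \<Longrightarrow> False"
  using prefix_app_cases[of u v r] by (auto simp: incomp_def)

lemma sf_comm: assumes "incomp u v" shows "sf u v w = sf v u w"
  using not_both[OF assms, of w] by (auto simp: sf_def)

lemma sf_u: assumes "incomp u v" "prefix u w" shows "sf u v w = v @ drop (length u) w"
  using assms by (simp add: sf_def)

lemma sf_v: assumes "incomp u v" "prefix v w" shows "sf u v w = u @ drop (length v) w"
  using assms not_both[OF assms(1), of w] by (auto simp add: sf_def)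

lemma sf_out: assumes "\<not> prefix u w" "\<not> prefix v w" shows "sf u v w = w"
  using assms by (simp add: sf_def)

lemma prefix_sf_u: assumes "incomp u v" shows "prefix u (sf u v w) \<longleftrightarrow> prefix v w"
proof (cases "prefix u w")
  case True
  then have "\<not> prefix v w" using not_both[OF assms] by blast
  moreover have "\<not> prefix u (v @ drop (length u) w)"
    using not_app[OF assms] by blast
  ultimately show ?thesis using True by (simp add: sf_def)
next
  case False
  then show ?thesis by (simp add: sf_def)
qed

lemma prefix_sf_v: assumes "incomp u v" shows "prefix v (sf u v w) \<longleftrightarrow> prefix u w"
  using prefix_sf_u[OF incomp_sym[OF assms]] sf_comm[OF assms] by simp

lemma prefix_sf_other: assumes "incomp x u" "incomp x v" "incomp u v"
  shows "prefix x (sf u v w) \<longleftrightarrow> prefix x w"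
proof (cases "prefix u w")
  case True
  have "\<not> prefix x (v @ drop (length u) w)" using not_app[OF assms(2)] by blast
  moreover have "\<not> prefix x w" using True not_both[OF assms(1)] by blast
  ultimately show ?thesis using True by (simp add: sf_def)
next
  case False
  show ?thesis
  proof (cases "prefix v w")
    case True
    have "\<not> prefix x (u @ drop (length v) w)" using not_app[OF assms(1)] by blast
    moreover have "\<not> prefix x w" using True not_both[OF assms(2)] by blast
    ultimately show ?thesis using True False by (simp add: sf_def)
  next
    case False2: False
    then show ?thesis using False by (simp add: sf_def)
  qed
qed

lemma sf_invol: assumes "incomp u v" shows "sf u v (sf u v w) = w"
proof (cases "prefix u w")
  case True
  then obtain r where w: "w = u @ r" by (auto simp: prefix_def)
  have "sf u v w = v @ r" using sf_u[OF assms True] w by simp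
  moreover have "sf u v (v @ r) = u @ r" using sf_v[OF assms, of "v @ r"] by simp
  ultimately show ?thesis using w by simp
next
  case False
  show ?thesis
  proof (cases "prefix v w")
    case True
    then obtain r where w: "w = v @ r" by (auto simp: prefix_def)
    have "sf u v w = u @ r" using sf_v[OF assms True] w by simp
    moreover have "sf u v (u @ r) = v @ r" using sf_u[OF assms, of "u @ r"] by simp
    ultimately show ?thesis using w by simp
  next
    case False2: False
    then show ?thesis using False by (simp add: sf_def)
  qed
qed

lemma sf_inj: "incomp u v \<Longrightarrow> sf u v x = sf u v y \<Longrightarrow> x = y"
  by (metis sf_invol)

lemma tree_inj: "is_prefix_code_tree c \<Longrightarrow> inj c"
  by (simp add: is_prefix_code_tree_def)
lemma tree_pf: "is_prefix_code_tree c \<Longrightarrow> x \<noteq> y \<Longrightarrow> \<not> prefix (c x) (c y)"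
  unfolding is_prefix_code_tree_def by blast
lemma tree_full: "is_prefix_code_tree c \<Longrightarrow> strict_prefix w (c x) \<Longrightarrow> \<exists>y. prefix (w @ [b]) (c y)"
  unfolding is_prefix_code_tree_def by blast

lemma pf_case_u:
  assumes I: "incomp u v" and "prefix u w1" and P: "prefix (sf u v w1) (sf u v w2)"
  shows "prefix w1 w2"
proof -
  obtain r1 where w1: "w1 = u @ r1" using assms(2) by (auto simp: prefix_def)
  have s1: "sf u v w1 = v @ r1" using sf_u[OF I assms(2)] w1 by simp
  have "prefix v (sf u v w2)" using P s1 by (metis prefix_order.trans prefix_def)
  then have "prefix u w2" using prefix_sf_v[OF I] by simp
  then obtain r2 where w2: "w2 = u @ r2" by (auto simp: prefix_def)
  have s2: "sf u v w2 = v @ r2" using sf_u[OF I \<open>prefix u w2\<close>] w2 by simp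
  from P s1 s2 have "prefix r1 r2" by simp
  then show ?thesis using w1 w2 by simp
qed

lemma pf_case_out:
  assumes T: "is_prefix_code_tree c" and I: "incomp u v" and nv: "\<exists>a. prefix v (c a)"
    and nu: "\<not> prefix u (c x)" and nvx: "\<not> prefix v (c x)" and pu: "prefix u (c y)"
    and P: "prefix (c x) (sf u v (c y))"
  shows False
proof -
  have "sf u v (c y) = v @ drop (length u) (c y)" using sf_u[OF I pu] .
  with P have "prefix (c x) v \<or> prefix v (c x)" using prefix_app_cases by metis
  with nvx have "prefix (c x) v" by simp
  from nv obtain d where d: "prefix v (c d)" by blast
  have "prefix (c x) (c d)" using \<open>prefix (c x) v\<close> d by (rule prefix_order.trans)
  then have "x = d" using tree_pf[OF T] by blast
  then show False using d nvx by simp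
qed

lemma swap_pf:
  assumes T: "is_prefix_code_tree c" and I: "incomp u v" and nu: "\<exists>a. prefix u (c a)" and nv: "\<exists>a. prefix v (c a)"
    and ne: "x \<noteq> y"
  shows "\<not> prefix (sf u v (c x)) (sf u v (c y))"
proof
  assume P: "prefix (sf u v (c x)) (sf u v (c y))"
  have I': "incomp v u" using incomp_sym[OF I] .
  consider (U) "prefix u (c x)" | (V) "prefix v (c x)" | (O) "\<not> prefix u (c x) \<and> \<not> prefix v (c x)" by blast
  then show False
  proof cases
    case U
    then have "prefix (c x) (c y)" using pf_case_u[OF I U P] by simp
    then show False using tree_pf[OF T ne] by simp
  next
    case V
    have P': "prefix (sf v u (c x)) (sf v u (c y))" using P sf_comm[OF I] by simp
    then have "prefix (c x) (c y)" using pf_case_u[OF I' V P'] by simp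
    then show False using tree_pf[OF T ne] by simp
  next
    case O
    then have sx: "sf u v (c x) = c x" by (simp add: sf_def)
    show False
    proof (cases "prefix u (c y)")
      case True
      show False by (rule pf_case_out[OF T I nv _ _ True, of x]) (use O P sx in auto)
    next
      case False
      show False
      proof (cases "prefix v (c y)")
        case True
        have P': "prefix (c x) (sf v u (c y))" using P sx sf_comm[OF I] by simp
        show False by (rule pf_case_out[OF T I' nu _ _ True, of x]) (use O P' in auto)
      next
        case False2: False
        then have "sf u v (c y) = c y" using False by (simp add: sf_def)
        then show False using P sx tree_pf[OF T ne] by simp
      qed
    qed
  qed
qed

lemma full_case_u:
  assumes T: "is_prefix_code_tree c" and I: "incomp u v" and pu: "prefix u w"
    and sp: "strict_prefix w (sf u v (c x))"
  shows "\<exists>y. prefix (w @ [b]) (sf u v (c y))"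
proof -
  have "prefix u (sf u v (c x))" using pu sp by (meson prefix_order.trans strict_prefix_def)
  then have pvx: "prefix v (c x)" using prefix_sf_u[OF I] by simp
  obtain w' where w: "w = u @ w'" using pu by (auto simp: prefix_def)
  obtain r where cx: "c x = v @ r" using pvx by (auto simp: prefix_def)
  have "sf u v (c x) = u @ r" using sf_v[OF I pvx] cx by simp
  with sp w have "strict_prefix w' r" by (auto simp: strict_prefix_def)
  then have "strict_prefix (v @ w') (c x)" using cx by (auto simp: strict_prefix_def)
  from tree_full[OF T this, where b=b] obtain y where y: "prefix (v @ w' @ [b]) (c y)" by auto
  then have pvy: "prefix v (c y)" by (metis prefix_order.trans prefix_def)
  obtain t where cy: "c y = v @ t" using pvy by (auto simp: prefix_def)
  have "sf u v (c y) = u @ t" using sf_v[OF I pvy] cy by simp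
  moreover have "prefix (w' @ [b]) t" using y cy by simp
  ultimately show ?thesis using w by (intro exI[of _ y]) simp
qed

lemma swap_full:
  assumes T: "is_prefix_code_tree c" and I: "incomp u v" and nu: "\<exists>a. prefix u (c a)" and nv: "\<exists>a. prefix v (c a)"
    and sp: "strict_prefix w (sf u v (c x))"
  shows "\<exists>y. prefix (w @ [b]) (sf u v (c y))"
proof -
  have I': "incomp v u" using incomp_sym[OF I] .
  consider (U) "prefix u w" | (V) "prefix v w" | (O) "\<not> prefix u w \<and> \<not> prefix v w" by blast
  then show ?thesis
  proof cases
    case U then show ?thesis using full_case_u[OF T I U sp] by blast
  next
    case V
    have sp': "strict_prefix w (sf v u (c x))" using sp sf_comm[OF I] by simp
    from full_case_u[OF T I' V sp'] show ?thesis using sf_comm[OF I] by simp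
  next
    case O
    have "\<exists>z. strict_prefix w (c z)"
    proof (cases "prefix u (c x)")
      case True
      then have "sf u v (c x) = v @ drop (length u) (c x)" using sf_u[OF I] by simp
      with sp have "prefix w v \<or> prefix v w" using prefix_app_cases by (metis strict_prefix_def)
      with O have "prefix w v" by simp
      with O have "strict_prefix w v" by (metis strict_prefix_def)
      from nv obtain d where "prefix v (c d)" by blast
      then show ?thesis using \<open>strict_prefix w v\<close> by (meson prefix_order.less_le_trans)
    next
      case False
      show ?thesis
      proof (cases "prefix v (c x)")
        case True
        then have "sf u v (c x) = u @ drop (length v) (c x)" using sf_v[OF I] by simp
        with sp have "prefix w u \<or> prefix u w" using prefix_app_cases by (metis strict_prefix_def)
        with O have "prefix w u" by simp
        with O have "strict_prefix w u" by (metis strict_prefix_def)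
        from nu obtain d where "prefix u (c d)" by blast
        then show ?thesis using \<open>strict_prefix w u\<close> by (meson prefix_order.less_le_trans)
      next
        case False2: False
        then have "sf u v (c x) = c x" using False by (simp add: sf_def)
        then show ?thesis using sp by (intro exI[of _ x]) simp
      qed
    qed
    then obtain z where "strict_prefix w (c z)" by blast
    from tree_full[OF T this, where b=b] obtain y where y: "prefix (w @ [b]) (c y)" by blast
    show ?thesis
    proof (cases "prefix u (c y)")
      case True
      have "prefix u (w @ [b]) \<or> prefix (w @ [b]) u" using prefix_same_cases[OF True y] by blast
      moreover have "prefix u (w @ [b]) \<Longrightarrow> u = w @ [b]" using O by (metis prefix_snoc)
      ultimately have wu: "prefix (w @ [b]) u" by auto
      from nv obtain d where d: "prefix v (c d)" by blast
      have "prefix u (sf u v (c d))" using prefix_sf_u[OF I] d by simp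
      then show ?thesis using wu by (meson prefix_order.trans)
    next
      case False
      show ?thesis
      proof (cases "prefix v (c y)")
        case True
        have "prefix v (w @ [b]) \<or> prefix (w @ [b]) v" using prefix_same_cases[OF True y] by blast
        moreover have "prefix v (w @ [b]) \<Longrightarrow> v = w @ [b]" using O by (metis prefix_snoc)
        ultimately have wv: "prefix (w @ [b]) v" by auto
        from nu obtain d where d: "prefix u (c d)" by blast
        have "prefix v (sf u v (c d))" using prefix_sf_v[OF I] d by simp
        then show ?thesis using wv by (meson prefix_order.trans)
      next
        case False2: False
        then have "sf u v (c y) = c y" using False by (simp add: sf_def)
        then show ?thesis using y by metis
      qed
    qed
  qed
qed

lemma swap_tree:
  assumes T: "is_prefix_code_tree c" and I: "incomp u v" and nu: "\<exists>a. prefix u (c a)" and nv: "\<exists>a. prefix v (c a)"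
  shows "is_prefix_code_tree (\<lambda>a. sf u v (c a))"
  unfolding is_prefix_code_tree_def
proof (intro conjI allI impI)
  show "inj (\<lambda>a. sf u v (c a))"
    using tree_inj[OF T] sf_inj[OF I] unfolding inj_def by blast
next
  fix x y :: "nat \<times> nat" assume "x \<noteq> y"
  then show "\<not> prefix (sf u v (c x)) (sf u v (c y))" using swap_pf[OF T I nu nv] by blast
next
  fix w b assume "\<exists>x. strict_prefix w (sf u v (c x))"
  then show "\<exists>x. prefix (w @ [b]) (sf u v (c x))" using swap_full[OF T I nu nv] by blast
qed




lemma ens[simp]: "(f :: 'a \<Rightarrow> ennreal) summable_on S"
  by (rule nonneg_summable_on_complete) simp

lemma infsum_cmult_ennreal:
  fixes f :: "'a \<Rightarrow> ennreal"
  assumes "c < top"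
  shows "infsum (\<lambda>a. c * f a) S = c * infsum f S"
proof -
  have "(f has_sum infsum f S) S" by (rule has_sum_infsum) simp
  then have "(sum f \<longlongrightarrow> infsum f S) (finite_subsets_at_top S)" by (simp add: has_sum_def)
  then have "((\<lambda>F. c * sum f F) \<longlongrightarrow> c * infsum f S) (finite_subsets_at_top S)"
    by (rule ennreal_tendsto_cmult[OF assms])
  then have "((\<lambda>a. c * f a) has_sum c * infsum f S) S"
    by (simp add: has_sum_def sum_distrib_left)
  then show ?thesis by (rule infsumI)
qed

definition Wt :: "real \<Rightarrow> (nat \<times> nat) set \<Rightarrow> ennreal" where
  "Wt q S = infsum (\<lambda>a. if a \<in> S then ennreal (TDGD q a) else 0) UNIV"

lemma Wt_Un: assumes "S \<inter> R = {}" shows "Wt q (S \<union> R) = Wt q S + Wt q R"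
proof -
  have "(\<lambda>a. if a \<in> S \<union> R then ennreal (TDGD q a) else 0) =
        (\<lambda>a. (if a \<in> S then ennreal (TDGD q a) else 0) + (if a \<in> R then ennreal (TDGD q a) else 0))"
    using assms by (auto simp: fun_eq_iff)
  then show ?thesis unfolding Wt_def by (simp add: infsum_add)
qed

lemma Wt_mono: assumes "S \<subseteq> R" shows "Wt q S \<le> Wt q R"
  unfolding Wt_def using assms by (intro infsum_mono) auto

lemma Wt_single: "Wt q {a} = ennreal (TDGD q a)"
proof -
  have "Wt q {a} = infsum (\<lambda>b. if b \<in> {a} then ennreal (TDGD q b) else 0) {a}"
    unfolding Wt_def by (rule infsum_cong_neutral) auto
  then show ?thesis by simp
qed

lemma len_sf_u: "incomp u v \<Longrightarrow> prefix u w \<Longrightarrow> length (sf u v w) = length w + length v - length u"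
  using sf_u by (simp add: prefix_length_le)
lemma len_sf_v: "incomp u v \<Longrightarrow> prefix v w \<Longrightarrow> length (sf u v w) = length w + length u - length v"
  using sf_v by (simp add: prefix_length_le)

lemma TDGD_nonneg: "0 < q \<Longrightarrow> q < 1 \<Longrightarrow> TDGD q a \<ge> 0"
  by (cases a) (simp add: TDGD_def)

lemma ennreal_term:
  fixes p :: real and k l l' :: nat
  assumes "p \<ge> 0" "l' + k = l + k'"
  shows "ennreal (p * real l') + of_nat k * ennreal p = ennreal (p * real l) + of_nat k' * ennreal p"
proof -
  have "ennreal (p * real l') + of_nat k * ennreal p = ennreal (p * real l' + real k * p)"
    using assms by (simp add: ennreal_plus ennreal_mult ennreal_of_nat_eq_real_of_nat)
  also have "p * real l' + real k * p = p * real l + real k' * p"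
  proof -
    have "real l' + real k = real l + real k'" using assms(2) by (metis of_nat_add)
    then show ?thesis by (simp add: algebra_simps) (metis distrib_left)
  qed
  also have "ennreal (p * real l + real k' * p) = ennreal (p * real l) + of_nat k' * ennreal p"
    using assms by (simp add: ennreal_plus ennreal_mult ennreal_of_nat_eq_real_of_nat)
  finally show ?thesis .
qed

lemma swap_cost:
  assumes q: "0 < q" "q < 1" and I: "incomp u v" and le: "length u \<le> length v"
  shows "expected_length q (\<lambda>a. sf u v (c a)) + of_nat (length v - length u) * Wt q (under c v)
       = expected_length q c + of_nat (length v - length u) * Wt q (under c u)"
proof -
  define k where "k = length v - length u"
  have kfin: "of_nat k < (top::ennreal)" by (metis ennreal_of_nat_neq_top top.not_eq_extremum)
  have trm: "ennreal (TDGD q a * real (length (sf u v (c a)))) + of_nat k * (if a \<in> under c v then ennreal (TDGD q a) else 0)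
     = ennreal (TDGD q a * real (length (c a))) + of_nat k * (if a \<in> under c u then ennreal (TDGD q a) else 0)" for a
  proof -
    have p: "TDGD q a \<ge> 0" using TDGD_nonneg q by blast
    consider (U) "prefix u (c a)" | (V) "prefix v (c a)" | (O) "\<not> prefix u (c a) \<and> \<not> prefix v (c a)" by blast
    then show ?thesis
    proof cases
      case U
      then have nv: "\<not> prefix v (c a)" using not_both[OF I] by blast
      have "length (sf u v (c a)) + 0 = length (c a) + k" using len_sf_u[OF I U] le k_def by simp
      from ennreal_term[OF p this] show ?thesis using U nv by (simp add: under_def)
    next
      case V
      then have nu: "\<not> prefix u (c a)" using not_both[OF I] by blast
      have "length v \<le> length (c a)" using V by (simp add: prefix_length_le)
      then have "length (sf u v (c a)) + k = length (c a) + 0" using len_sf_v[OF I V] le k_def by simp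
      from ennreal_term[OF p this] show ?thesis using V nu by (simp add: under_def)
    next
      case O
      then show ?thesis by (simp add: sf_def under_def)
    qed
  qed
  have "expected_length q (\<lambda>a. sf u v (c a)) + of_nat k * Wt q (under c v)
      = infsum (\<lambda>a. ennreal (TDGD q a * real (length (sf u v (c a)))) + of_nat k * (if a \<in> under c v then ennreal (TDGD q a) else 0)) UNIV"
    unfolding expected_length_def Wt_def by (simp add: infsum_add infsum_cmult_ennreal[OF kfin])
  also have "\<dots> = infsum (\<lambda>a. ennreal (TDGD q a * real (length (c a))) + of_nat k * (if a \<in> under c u then ennreal (TDGD q a) else 0)) UNIV"
    using trm by simp
  also have "\<dots> = expected_length q c + of_nat k * Wt q (under c u)"
    unfolding expected_length_def Wt_def by (simp add: infsum_add infsum_cmult_ennreal[OF kfin])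
  finally show ?thesis unfolding k_def .
qed

definition opt :: "real \<Rightarrow> (nat \<times> nat \<Rightarrow> bool list) \<Rightarrow> bool" where
  "opt q c \<longleftrightarrow> optimal_tree q c \<and> expected_length q c < \<infinity>"

lemma F1:
  assumes q: "0 < q" "q < 1" and O: "opt q c" and I: "incomp u v" and lt: "length u < length v"
    and nu: "\<exists>a. prefix u (c a)" and nv: "\<exists>a. prefix v (c a)"
  shows "Wt q (under c v) \<le> Wt q (under c u)"
proof -
  have T: "is_prefix_code_tree c" using O by (simp add: opt_def optimal_tree_def)
  have T': "is_prefix_code_tree (\<lambda>a. sf u v (c a))" by (rule swap_tree[OF T I nu nv])
  have le: "expected_length q c \<le> expected_length q (\<lambda>a. sf u v (c a))"
    using O T' by (simp add: opt_def optimal_tree_def)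
  have fin: "expected_length q c \<noteq> \<infinity>" using O by (auto simp: opt_def)
  define k where "k = length v - length u"
  have eq: "expected_length q (\<lambda>a. sf u v (c a)) + of_nat k * Wt q (under c v)
       = expected_length q c + of_nat k * Wt q (under c u)"
    using swap_cost[OF q I] lt unfolding k_def by simp
  have "expected_length q c + of_nat k * Wt q (under c v) \<le> expected_length q c + of_nat k * Wt q (under c u)"
    using le eq by (metis add_right_mono)
  then have "of_nat k * Wt q (under c v) \<le> of_nat k * Wt q (under c u)"
    using fin ennreal_add_left_cancel_le by (simp add: top_unique)
  moreover have "0 < k" using lt k_def by simp
  moreover have "(of_nat k :: ennreal) \<noteq> 0" using \<open>0 < k\<close> by simp
  moreover have "(of_nat k :: ennreal) \<noteq> top" by (rule ennreal_of_nat_neq_top)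
  ultimately show ?thesis using ennreal_mult_le_mult_iff by blast
qed




definition sib :: "bool list \<Rightarrow> bool list" where
  "sib v = butlast v @ [\<not> last v]"

lemma sib_len: "v \<noteq> [] \<Longrightarrow> length (sib v) = length v"
  by (simp add: sib_def)
lemma v_decomp: "v \<noteq> [] \<Longrightarrow> v = butlast v @ [last v]"
  by simp
lemma sib_ne: "v \<noteq> [] \<Longrightarrow> sib v \<noteq> v"
proof
  assume "sib v = v"
  moreover have "last (sib v) = (\<not> last v)" by (simp add: sib_def)
  ultimately show False by simp
qed
lemma sib_sib: "v \<noteq> [] \<Longrightarrow> sib (sib v) = v"
  by (simp add: sib_def)
lemma sib_nonempty: "sib v \<noteq> []"
  by (simp add: sib_def)

lemma prefix_eq_len: "prefix u v \<Longrightarrow> length u = length v \<Longrightarrow> u = v"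
  by (auto simp: prefix_def)

lemma incomp_len: "length u = length v \<Longrightarrow> u \<noteq> v \<Longrightarrow> incomp u v"
  unfolding incomp_def using prefix_eq_len[of u v] prefix_eq_len[of v u] by auto

lemma under_disj: assumes "length u = length v" "u \<noteq> v" shows "under c u \<inter> under c v = {}"
proof -
  have "\<not> (prefix u (c x) \<and> prefix v (c x))" for x
    using prefix_same_cases[of u "c x" v] prefix_eq_len[of u v] prefix_eq_len[of v u] assms by auto
  then show ?thesis by (auto simp: under_def)
qed

lemma under_ne: "under c v \<noteq> {} \<longleftrightarrow> (\<exists>a. prefix v (c a))"
  by (auto simp: under_def)

lemma under_leaf: assumes "is_prefix_code_tree c" shows "under c (c a) = {a}"
proof -
  have "prefix (c a) (c x) \<longleftrightarrow> x = a" for x using tree_pf[OF assms, of a x] by auto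
  then show ?thesis by (auto simp: under_def)
qed

lemma under_sf_u: "incomp u v \<Longrightarrow> under (\<lambda>a. sf u v (c a)) u = under c v"
  unfolding under_def using prefix_sf_u by blast
lemma under_sf_v: "incomp u v \<Longrightarrow> under (\<lambda>a. sf u v (c a)) v = under c u"
  unfolding under_def using prefix_sf_v by blast
lemma under_sf_other: "incomp x u \<Longrightarrow> incomp x v \<Longrightarrow> incomp u v \<Longrightarrow> under (\<lambda>a. sf u v (c a)) x = under c x"
  unfolding under_def using prefix_sf_other by blast

lemma len_sf_same: assumes "incomp u v" "length u = length v" shows "length (sf u v w) = length w"
proof (cases "prefix u w")
  case True then show ?thesis using len_sf_u[OF assms(1)] assms(2) by simp
next
  case False
  show ?thesis
  proof (cases "prefix v w")
    case True then show ?thesis using len_sf_v[OF assms(1)] assms(2) by simp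
  next
    case False then show ?thesis using \<open>\<not> prefix u w\<close> by (simp add: sf_def)
  qed
qed

lemma node_sib:
  assumes T: "is_prefix_code_tree c" and "prefix v (c a)" "v \<noteq> []"
  shows "\<exists>b. prefix (sib v) (c b)"
proof -
  have p1: "prefix (butlast v) v" using assms(3) by (metis prefix_def append_butlast_last_id)
  have "butlast v \<noteq> v" using assms(3) by (metis length_butlast diff_less length_greater_0_conv zero_less_one less_irrefl)
  then have "strict_prefix (butlast v) v" using p1 by (simp add: strict_prefix_def)
  then have "strict_prefix (butlast v) (c a)" using assms(2) by (meson prefix_order.less_le_trans)
  from tree_full[OF T this, where b="\<not> last v"] show ?thesis by (simp add: sib_def)
qed

lemma under_parent:
  assumes T: "is_prefix_code_tree c" and va: "prefix v (c a)" and ne: "v \<noteq> []"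
  shows "under c (butlast v) = under c v \<union> under c (sib v)"
proof
  show "under c v \<union> under c (sib v) \<subseteq> under c (butlast v)"
  proof -
    have p1: "prefix (butlast v) v" using ne by (metis prefix_def append_butlast_last_id)
    have p2: "prefix (butlast v) (sib v)" by (simp add: sib_def)
    show ?thesis unfolding under_def using p1 p2 by (auto intro: prefix_order.trans)
  qed
next
  show "under c (butlast v) \<subseteq> under c v \<union> under c (sib v)"
  proof
    fix x assume "x \<in> under c (butlast v)"
    then have px: "prefix (butlast v) (c x)" by (simp add: under_def)
    have neq: "c x \<noteq> butlast v"
    proof
      assume e: "c x = butlast v"
      have "prefix (c x) (c a)" using e va ne by (metis prefix_order.trans prefix_def v_decomp)
      then have "x = a" using tree_pf[OF T] by blast
      then have "prefix v (butlast v)" using e va by simp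
      then have "length v \<le> length (butlast v)" by (rule prefix_length_le)
      moreover have "length (butlast v) < length v" using ne by simp
      ultimately show False by linarith
    qed
    obtain r where r: "c x = butlast v @ r" using px by (auto simp: prefix_def)
    then obtain y r' where "r = y # r'" using neq by (cases r) auto
    show "x \<in> under c v \<union> under c (sib v)"
    proof (cases "y = last v")
      case True
      then have "c x = (butlast v @ [last v]) @ r'" using r \<open>r = y # r'\<close> by simp
      then have "c x = v @ r'" using ne by simp
      then have "prefix v (c x)" by simp
      then show ?thesis by (simp add: under_def)
    next
      case False
      then have "y = (\<not> last v)" by simp
      then have "prefix (sib v) (c x)" using r \<open>r = y # r'\<close> by (simp add: sib_def)
      then show ?thesis by (simp add: under_def)
    qed
  qed
qed




lemma realized_disj:
  assumes "under c v = C" "under c v' = C'" "length v = length v'" "C \<noteq> C'"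
  shows "C \<inter> C' = {}"
  using under_disj[of v v' c] assms by auto

lemma pairing:
  fixes T :: nat and k :: nat
  assumes "is_prefix_code_tree c" "finite \<C>" "2 * k \<le> card \<C>" "0 < T"
    "\<forall>C\<in>\<C>. C \<noteq> {} \<and> (\<exists>v. length v = T \<and> v \<notin> Prot \<and> under c v = C)"
    "\<forall>p\<in>Prot. length p = T \<and> sib p \<in> Prot"
  shows "\<exists>c'. is_prefix_code_tree c' \<and> (\<forall>a. length (c' a) = length (c a)) \<and>
     (\<forall>p\<in>Prot. under c' p = under c p) \<and>
     (\<exists>\<C>'. finite \<C>' \<and> k \<le> card \<C>' \<and> (\<forall>C'\<in>\<C>'. C' \<noteq> {} \<and> (\<exists>P. length P = T - 1 \<and> under c' P = C') \<and>
          (\<exists>C1\<in>\<C>. \<exists>C2\<in>\<C>. C1 \<noteq> C2 \<and> C' = C1 \<union> C2)))"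
  using assms
proof (induction k arbitrary: c \<C> Prot)
  case 0
  then show ?case by (intro exI[of _ c] conjI) (auto intro!: exI[of _ "{}"])
next
  case (Suc k)
  note T = Suc.prems(1)
  have c2: "2 \<le> card \<C>" using Suc.prems(3) by simp
  then have "\<C> \<noteq> {}" by auto
  then obtain C1 where C1: "C1 \<in> \<C>" by blast
  have "card (\<C> - {C1}) \<ge> 1" using c2 C1 Suc.prems(2) by simp
  then have "\<C> - {C1} \<noteq> {}" by (metis card.empty not_one_le_zero)
  then obtain C2 where C2: "C2 \<in> \<C>" "C2 \<noteq> C1" by blast
  obtain v1 where v1: "length v1 = T" "v1 \<notin> Prot" "under c v1 = C1" and ne1: "C1 \<noteq> {}" using Suc.prems(5) C1 by blast
  obtain v2 where v2: "length v2 = T" "v2 \<notin> Prot" "under c v2 = C2" and ne2: "C2 \<noteq> {}" using Suc.prems(5) C2 by blast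
  have v12: "v1 \<noteq> v2" using v1 v2 C2 by auto
  have v1ne: "v1 \<noteq> []" using v1 Suc.prems(4) by auto
  obtain a1 where a1: "prefix v1 (c a1)" using ne1 v1(3) unfolding under_def by auto
  obtain a2 where a2: "prefix v2 (c a2)" using ne2 v2(3) unfolding under_def by auto
  define z where "z = sib v1"
  have zlen: "length z = T" using sib_len[OF v1ne] v1 z_def by simp
  have zv1: "z \<noteq> v1" using sib_ne[OF v1ne] z_def by simp
  have znode: "\<exists>b. prefix z (c b)" using node_sib[OF T a1 v1ne] z_def by simp
  have zP: "z \<notin> Prot" using Suc.prems(6) v1 sib_sib[OF v1ne] z_def by metis
  have Cdisj: "\<And>C C'. C \<in> \<C> \<Longrightarrow> C' \<in> \<C> \<Longrightarrow> C \<noteq> C' \<Longrightarrow> C \<inter> C' = {}"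
  proof -
    fix C C' assume "C \<in> \<C>" "C' \<in> \<C>" "C \<noteq> C'"
    then obtain v v' where "length v = T" "under c v = C" "length v' = T" "under c v' = C'" using Suc.prems(5) by metis
    then show "C \<inter> C' = {}" using realized_disj \<open>C \<noteq> C'\<close> by metis
  qed
  obtain c1 where T1: "is_prefix_code_tree c1" and L1: "\<forall>a. length (c1 a) = length (c a)"
    and U1: "under c1 v1 = C1" and U2: "under c1 z = C2"
    and UP: "\<forall>p\<in>Prot. under c1 p = under c p"
    and UR: "\<forall>C\<in>\<C> - {C1, C2}. \<exists>v. length v = T \<and> v \<notin> Prot \<union> {v1, z} \<and> under c1 v = C"
  proof (cases "z = v2")
    case True
    show ?thesis
    proof (rule that[of c])
      show "\<forall>C\<in>\<C> - {C1, C2}. \<exists>v. length v = T \<and> v \<notin> Prot \<union> {v1, z} \<and> under c v = C"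
      proof
        fix C assume C: "C \<in> \<C> - {C1, C2}"
        then obtain v where v: "length v = T" "v \<notin> Prot" "under c v = C" using Suc.prems(5) by blast
        have "v \<noteq> v1" "v \<noteq> z" using v v1 v2 C True by auto
        then show "\<exists>v. length v = T \<and> v \<notin> Prot \<union> {v1, z} \<and> under c v = C" using v by blast
      qed
    qed (use T v1 v2 True in auto)
  next
    case False
    have I: "incomp v2 z" using incomp_len[of v2 z] v2 zlen False by simp
    define c1 where "c1 = (\<lambda>a. sf v2 z (c a))"
    have Iv1: "incomp v1 v2" "incomp v1 z" using incomp_len v1 v2 zlen v12 zv1 by (simp_all add: eq_commute)
    show ?thesis
    proof (rule that[of c1])
      show "is_prefix_code_tree c1" unfolding c1_def by (rule swap_tree[OF T I]) (use a2 znode in blast)+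
      show "\<forall>a. length (c1 a) = length (c a)" unfolding c1_def using len_sf_same[OF I] v2 zlen by simp
      show "under c1 v1 = C1" unfolding c1_def using under_sf_other[OF Iv1 I, of c] v1 by simp
      show "under c1 z = C2" unfolding c1_def using under_sf_v[OF I, of c] v2 by simp
      show "\<forall>p\<in>Prot. under c1 p = under c p"
      proof
        fix p assume p: "p \<in> Prot"
        have pl: "length p = T" using p Suc.prems(6) by blast
        have "p \<noteq> v2" "p \<noteq> z" using p v2(2) zP by auto
        then have "incomp p v2" "incomp p z" using incomp_len pl v2(1) zlen by simp_all
        then show "under c1 p = under c p" unfolding c1_def using under_sf_other[OF _ _ I, of p c] by simp
      qed
      show "\<forall>C\<in>\<C> - {C1, C2}. \<exists>v. length v = T \<and> v \<notin> Prot \<union> {v1, z} \<and> under c1 v = C"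
      proof
        fix C assume C: "C \<in> \<C> - {C1, C2}"
        then obtain v where v: "length v = T" "v \<notin> Prot" "under c v = C" using Suc.prems(5) by blast
        have vv1: "v \<noteq> v1" "v \<noteq> v2" using v v1 v2 C by auto
        show "\<exists>v. length v = T \<and> v \<notin> Prot \<union> {v1, z} \<and> under c1 v = C"
        proof (cases "v = z")
          case True
          have "under c1 v2 = C" unfolding c1_def using under_sf_u[OF I, of c] True v by simp
          then show ?thesis using v2 v12 False by auto
        next
          case False2: False
          have "incomp v v2" "incomp v z" using incomp_len v v2 zlen vv1 False2 by simp_all
          then have "under c1 v = C" unfolding c1_def using under_sf_other[OF _ _ I, of v c] v by simp
          then show ?thesis using v vv1 False2 by auto
        qed
      qed
    qed
  qed
  have card': "2 * k \<le> card (\<C> - {C1, C2})" using Suc.prems(2,3) C1 C2 by (simp add: card_Diff_subset)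
  have fin': "finite (\<C> - {C1, C2})" using Suc.prems(2) by simp
  have real': "\<forall>C\<in>\<C> - {C1, C2}. C \<noteq> {} \<and> (\<exists>v. length v = T \<and> v \<notin> Prot \<union> {v1, z} \<and> under c1 v = C)"
    using UR Suc.prems(5) by blast
  have prot': "\<forall>p\<in>Prot \<union> {v1, z}. length p = T \<and> sib p \<in> Prot \<union> {v1, z}"
    using Suc.prems(6) v1 zlen z_def sib_sib[OF v1ne] by auto
  from Suc.IH[OF T1 fin' card' Suc.prems(4) real' prot'] obtain c' where
    T': "is_prefix_code_tree c'" and L': "\<forall>a. length (c' a) = length (c1 a)"
    and UP': "\<forall>p\<in>Prot \<union> {v1, z}. under c' p = under c1 p"
    and EX: "\<exists>\<C>'. finite \<C>' \<and> k \<le> card \<C>' \<and> (\<forall>C'\<in>\<C>'. C' \<noteq> {} \<and> (\<exists>P. length P = T - 1 \<and> under c' P = C') \<and>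
          (\<exists>D1\<in>\<C> - {C1, C2}. \<exists>D2\<in>\<C> - {C1, C2}. D1 \<noteq> D2 \<and> C' = D1 \<union> D2))"
    by (elim exE conjE) iprover
  from EX obtain \<C>'' where fin'': "finite \<C>''" and card'': "k \<le> card \<C>''"
    and P'': "\<forall>C'\<in>\<C>''. C' \<noteq> {} \<and> (\<exists>P. length P = T - 1 \<and> under c' P = C') \<and>
          (\<exists>D1\<in>\<C> - {C1, C2}. \<exists>D2\<in>\<C> - {C1, C2}. D1 \<noteq> D2 \<and> C' = D1 \<union> D2)"
    by (elim exE conjE) iprover
  have uv1: "under c' v1 = C1" using UP' U1 by simp
  have uz: "under c' z = C2" using UP' U2 by simp
  obtain b1 where b1: "prefix v1 (c' b1)" using uv1 ne1 unfolding under_def by auto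
  have upar: "under c' (butlast v1) = C1 \<union> C2"
    using under_parent[OF T' b1 v1ne] uv1 uz z_def by simp
  have notin: "C1 \<union> C2 \<notin> \<C>''"
  proof
    assume "C1 \<union> C2 \<in> \<C>''"
    from bspec[OF P'' this] have "\<exists>D1\<in>\<C> - {C1, C2}. \<exists>D2\<in>\<C> - {C1, C2}. D1 \<noteq> D2 \<and> C1 \<union> C2 = D1 \<union> D2"
      by (elim conjE)
    then obtain C3 C4 where C34: "C3 \<in> \<C> - {C1, C2}" "C4 \<in> \<C> - {C1, C2}" "C1 \<union> C2 = C3 \<union> C4"
      by (elim bexE conjE) iprover
    obtain x where x: "x \<in> C1" using ne1 by blast
    then have "x \<in> C3 \<or> x \<in> C4" using C34(3) by blast
    moreover have "C1 \<noteq> C3" "C1 \<noteq> C4" "C3 \<in> \<C>" "C4 \<in> \<C>" using C34 by auto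
    ultimately show False using Cdisj[of C1 C3] Cdisj[of C1 C4] C1 x by blast
  qed
  show ?case
  proof (intro exI[of _ c'] conjI)
    show "is_prefix_code_tree c'" by (rule T')
    show "\<forall>a. length (c' a) = length (c a)" using L' L1 by simp
    show "\<forall>p\<in>Prot. under c' p = under c p" using UP' UP by simp
    show "\<exists>\<C>'. finite \<C>' \<and> Suc k \<le> card \<C>' \<and> (\<forall>C'\<in>\<C>'. C' \<noteq> {} \<and> (\<exists>P. length P = T - 1 \<and> under c' P = C') \<and>
          (\<exists>C1\<in>\<C>. \<exists>C2\<in>\<C>. C1 \<noteq> C2 \<and> C' = C1 \<union> C2))"
    proof (intro exI[of _ "insert (C1 \<union> C2) \<C>''"] conjI)
      show "finite (insert (C1 \<union> C2) \<C>'')" using fin'' by simp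
      show "Suc k \<le> card (insert (C1 \<union> C2) \<C>'')" using fin'' notin card'' by simp
      show "\<forall>C'\<in>insert (C1 \<union> C2) \<C>''. C' \<noteq> {} \<and> (\<exists>P. length P = T - 1 \<and> under c' P = C') \<and>
          (\<exists>C1\<in>\<C>. \<exists>C2\<in>\<C>. C1 \<noteq> C2 \<and> C' = C1 \<union> C2)"
      proof
        fix C' assume "C' \<in> insert (C1 \<union> C2) \<C>''"
        then show "C' \<noteq> {} \<and> (\<exists>P. length P = T - 1 \<and> under c' P = C') \<and> (\<exists>C1\<in>\<C>. \<exists>C2\<in>\<C>. C1 \<noteq> C2 \<and> C' = C1 \<union> C2)"
        proof
          assume e: "C' = C1 \<union> C2"
          have l: "length (butlast v1) = T - 1" using v1 by simp
          have a: "C' \<noteq> {}" using e ne1 by simp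
          have b: "\<exists>P. length P = T - 1 \<and> under c' P = C'" using l upar e by blast
          have c: "\<exists>D1\<in>\<C>. \<exists>D2\<in>\<C>. D1 \<noteq> D2 \<and> C' = D1 \<union> D2"
            using C1 C2 e by blast
          show ?thesis using a b c by iprover
        next
          assume "C' \<in> \<C>''"
          from bspec[OF P'' this] have a: "C' \<noteq> {}" and b: "\<exists>P. length P = T - 1 \<and> under c' P = C'"
            and d: "\<exists>D1\<in>\<C> - {C1, C2}. \<exists>D2\<in>\<C> - {C1, C2}. D1 \<noteq> D2 \<and> C' = D1 \<union> D2"
            by simp_all
          from d obtain D1 D2 where "D1 \<in> \<C>" "D2 \<in> \<C>" "D1 \<noteq> D2" "C' = D1 \<union> D2"
            by (elim bexE conjE DiffE) iprover
          then have c: "\<exists>D1\<in>\<C>. \<exists>D2\<in>\<C>. D1 \<noteq> D2 \<and> C' = D1 \<union> D2" by blast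
          show ?thesis using a b c by iprover
        qed
      qed
    qed
  qed
qed




lemma opt_same_len:
  assumes "opt q c" "is_prefix_code_tree c'" "\<forall>a. length (c' a) = length (c a)"
  shows "opt q c'"
proof -
  have e: "\<And>a. length (c' a) = length (c a)" using assms(3) by blast
  have "expected_length q c' = expected_length q c"
    unfolding expected_length_def by (simp only: e)
  then show ?thesis using assms unfolding opt_def optimal_tree_def by simp
qed

lemma pair_weight:
  assumes "is_prefix_code_tree c" "C1 \<noteq> C2"
    "under c v1 = C1" "length v1 = T" "under c v2 = C2" "length v2 = T"
  shows "Wt q (C1 \<union> C2) = Wt q C1 + Wt q C2"
  using Wt_Un realized_disj[of c v1 C1 v2 C2] assms by simp

lemma lower:
  fixes h :: nat
  assumes q: "0 < q" "q < 1"
  shows "opt q c \<Longrightarrow> finite \<C> \<Longrightarrow> 2^h \<le> card \<C> \<Longrightarrow>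
    \<forall>C\<in>\<C>. C \<noteq> {} \<and> (\<exists>v. length v = T \<and> under c v = C) \<and> w \<le> Wt q C \<Longrightarrow>
    length (c a) + h < T \<Longrightarrow> 2^h * w \<le> ennreal (TDGD q a)"
proof (induction h arbitrary: c \<C> w T)
  case 0
  have T0: "is_prefix_code_tree c" using "0.prems"(1) by (simp add: opt_def optimal_tree_def)
  have "\<C> \<noteq> {}" using "0.prems"(2,3) by auto
  then obtain C where C: "C \<in> \<C>" by blast
  with "0.prems"(4) obtain v where v: "length v = T" "under c v = C" and Cne: "C \<noteq> {}" and wC: "w \<le> Wt q C" by blast
  obtain d where d: "prefix v (c d)" using Cne v(2) unfolding under_def by auto
  have lt: "length (c a) < length v" using v "0.prems"(5) by simp
  have n1: "\<not> prefix v (c a)" using lt prefix_length_le by fastforce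
  have n2: "\<not> prefix (c a) v"
  proof
    assume "prefix (c a) v"
    then have "prefix (c a) (c d)" using d by (rule prefix_order.trans)
    then have "a = d" using tree_pf[OF T0] by blast
    then show False using d n1 by simp
  qed
  have I: "incomp (c a) v" using n1 n2 by (simp add: incomp_def)
  have "Wt q (under c v) \<le> Wt q (under c (c a))"
    by (rule F1[OF q "0.prems"(1) I lt]) (use d in blast)+
  then have "Wt q C \<le> ennreal (TDGD q a)" using under_leaf[OF T0] v Wt_single by simp
  then show ?case using wC by simp
next
  case (Suc h)
  have T0: "is_prefix_code_tree c" using Suc.prems(1) by (simp add: opt_def optimal_tree_def)
  have Tpos: "0 < T" using Suc.prems(5) by simp
  have card2: "2 * 2^h \<le> card \<C>" using Suc.prems(3) by simp
  have real: "\<forall>C\<in>\<C>. C \<noteq> {} \<and> (\<exists>v. length v = T \<and> v \<notin> {} \<and> under c v = C)" using Suc.prems(4) by blast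
  from pairing[OF T0 Suc.prems(2) card2 Tpos real] obtain c' where
    T': "is_prefix_code_tree c'" and L': "\<forall>a. length (c' a) = length (c a)"
    and EX: "\<exists>\<C>'. finite \<C>' \<and> 2^h \<le> card \<C>' \<and> (\<forall>C'\<in>\<C>'. C' \<noteq> {} \<and> (\<exists>P. length P = T - 1 \<and> under c' P = C') \<and>
          (\<exists>C1\<in>\<C>. \<exists>C2\<in>\<C>. C1 \<noteq> C2 \<and> C' = C1 \<union> C2))"
    by auto
  from EX obtain \<C>' where fin': "finite \<C>'" and card': "2^h \<le> card \<C>'"
    and P': "\<forall>C'\<in>\<C>'. C' \<noteq> {} \<and> (\<exists>P. length P = T - 1 \<and> under c' P = C') \<and>
          (\<exists>C1\<in>\<C>. \<exists>C2\<in>\<C>. C1 \<noteq> C2 \<and> C' = C1 \<union> C2)"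
    by (elim exE conjE) iprover
  have O': "opt q c'" using opt_same_len[OF Suc.prems(1) T' L'] .
  have P2: "\<forall>C'\<in>\<C>'. C' \<noteq> {} \<and> (\<exists>P. length P = T - 1 \<and> under c' P = C') \<and> 2 * w \<le> Wt q C'"
  proof
    fix C' assume "C' \<in> \<C>'"
    from bspec[OF P' this] have a: "C' \<noteq> {}" and b: "\<exists>P. length P = T - 1 \<and> under c' P = C'"
      and d: "\<exists>C1\<in>\<C>. \<exists>C2\<in>\<C>. C1 \<noteq> C2 \<and> C' = C1 \<union> C2" by simp_all
    from d obtain C1 C2 where C12: "C1 \<in> \<C>" "C2 \<in> \<C>" "C1 \<noteq> C2" "C' = C1 \<union> C2" by blast
    obtain v1 where v1: "length v1 = T" "under c v1 = C1" and w1: "w \<le> Wt q C1" using Suc.prems(4) C12(1) by blast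
    obtain v2 where v2: "length v2 = T" "under c v2 = C2" and w2: "w \<le> Wt q C2" using Suc.prems(4) C12(2) by blast
    have "Wt q C' = Wt q C1 + Wt q C2" using pair_weight[OF T0 C12(3) v1(2) v1(1) v2(2) v2(1)] C12(4) by simp
    moreover have "2 * w = w + w" by (simp add: mult_2)
    ultimately have "2 * w \<le> Wt q C'" using w1 w2 by (simp add: add_mono)
    then show "C' \<noteq> {} \<and> (\<exists>P. length P = T - 1 \<and> under c' P = C') \<and> 2 * w \<le> Wt q C'" using a b by blast
  qed
  have "length (c' a) = length (c a)" using L' by blast
  then have len': "length (c' a) + h < T - 1" using Suc.prems(5) by simp
  have "2^h * (2 * w) \<le> ennreal (TDGD q a)" by (rule Suc.IH[OF O' fin' card' P2 len'])
  then show ?case by (simp add: mult.assoc mult.commute mult.left_commute)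
qed

lemma upper:
  fixes h :: nat
  assumes q: "0 < q" "q < 1"
  shows "opt q c \<Longrightarrow> finite \<C> \<Longrightarrow> 2^h \<le> card \<C> \<Longrightarrow>
    \<forall>C\<in>\<C>. C \<noteq> {} \<and> (\<exists>v. length v = T \<and> under c v = C) \<and> Wt q C \<le> w \<and> a \<notin> C \<Longrightarrow>
    T < length (c a) + h \<Longrightarrow> ennreal (TDGD q a) \<le> 2^h * w"
proof (induction h arbitrary: c \<C> w T)
  case 0
  have T0: "is_prefix_code_tree c" using "0.prems"(1) by (simp add: opt_def optimal_tree_def)
  have "\<C> \<noteq> {}" using "0.prems"(2,3) by auto
  then obtain C where C: "C \<in> \<C>" by blast
  with "0.prems"(4) obtain v where v: "length v = T" "under c v = C" and Cne: "C \<noteq> {}" and wC: "Wt q C \<le> w" and aC: "a \<notin> C" by blast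
  obtain d where d: "prefix v (c d)" using Cne v(2) unfolding under_def by auto
  have lt: "length v < length (c a)" using v "0.prems"(5) by simp
  have n1: "\<not> prefix (c a) v" using lt prefix_length_le by fastforce
  have n2: "\<not> prefix v (c a)" using aC v(2) by (auto simp: under_def)
  have I: "incomp v (c a)" using n1 n2 by (simp add: incomp_def)
  have "Wt q (under c (c a)) \<le> Wt q (under c v)"
    by (rule F1[OF q "0.prems"(1) I lt]) (use d in blast)+
  then have "ennreal (TDGD q a) \<le> Wt q C" using under_leaf[OF T0] v Wt_single by simp
  then show ?case using wC by simp
next
  case (Suc h)
  have T0: "is_prefix_code_tree c" using Suc.prems(1) by (simp add: opt_def optimal_tree_def)
  have card2: "2 * 2^h \<le> card \<C>" using Suc.prems(3) by simp
  have Tpos: "0 < T"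
  proof (rule ccontr)
    assume "\<not> 0 < T"
    then have T0': "T = 0" by simp
    have "2 \<le> 2 * (2::nat)^h" by simp
    then have "2 \<le> card \<C>" using card2 by linarith
    then have "\<C> \<noteq> {}" by auto
    then obtain C1 where C1: "C1 \<in> \<C>" by blast
    have "card (\<C> - {C1}) \<ge> 1" using \<open>2 \<le> card \<C>\<close> C1 Suc.prems(2) by simp
    then have "\<C> - {C1} \<noteq> {}" by (metis card.empty not_one_le_zero)
    then obtain C2 where C2: "C2 \<in> \<C>" "C2 \<noteq> C1" by blast
    obtain v1 where "length v1 = T" "under c v1 = C1" using Suc.prems(4) C1 by blast
    moreover obtain v2 where "length v2 = T" "under c v2 = C2" using Suc.prems(4) C2 by blast
    ultimately show False using T0' C2 by simp
  qed
  have real: "\<forall>C\<in>\<C>. C \<noteq> {} \<and> (\<exists>v. length v = T \<and> v \<notin> {} \<and> under c v = C)" using Suc.prems(4) by blast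
  from pairing[OF T0 Suc.prems(2) card2 Tpos real] obtain c' where
    T': "is_prefix_code_tree c'" and L': "\<forall>a. length (c' a) = length (c a)"
    and EX: "\<exists>\<C>'. finite \<C>' \<and> 2^h \<le> card \<C>' \<and> (\<forall>C'\<in>\<C>'. C' \<noteq> {} \<and> (\<exists>P. length P = T - 1 \<and> under c' P = C') \<and>
          (\<exists>C1\<in>\<C>. \<exists>C2\<in>\<C>. C1 \<noteq> C2 \<and> C' = C1 \<union> C2))"
    by auto
  from EX obtain \<C>' where fin': "finite \<C>'" and card': "2^h \<le> card \<C>'"
    and P': "\<forall>C'\<in>\<C>'. C' \<noteq> {} \<and> (\<exists>P. length P = T - 1 \<and> under c' P = C') \<and>
          (\<exists>C1\<in>\<C>. \<exists>C2\<in>\<C>. C1 \<noteq> C2 \<and> C' = C1 \<union> C2)"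
    by (elim exE conjE) iprover
  have O': "opt q c'" using opt_same_len[OF Suc.prems(1) T' L'] .
  have P2: "\<forall>C'\<in>\<C>'. C' \<noteq> {} \<and> (\<exists>P. length P = T - 1 \<and> under c' P = C') \<and> Wt q C' \<le> 2 * w \<and> a \<notin> C'"
  proof
    fix C' assume "C' \<in> \<C>'"
    from bspec[OF P' this] have a: "C' \<noteq> {}" and b: "\<exists>P. length P = T - 1 \<and> under c' P = C'"
      and d: "\<exists>C1\<in>\<C>. \<exists>C2\<in>\<C>. C1 \<noteq> C2 \<and> C' = C1 \<union> C2" by simp_all
    from d obtain C1 C2 where C12: "C1 \<in> \<C>" "C2 \<in> \<C>" "C1 \<noteq> C2" "C' = C1 \<union> C2" by blast
    obtain v1 where v1: "length v1 = T" "under c v1 = C1" and w1: "Wt q C1 \<le> w" and a1: "a \<notin> C1" using Suc.prems(4) C12(1) by blast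
    obtain v2 where v2: "length v2 = T" "under c v2 = C2" and w2: "Wt q C2 \<le> w" and a2: "a \<notin> C2" using Suc.prems(4) C12(2) by blast
    have "Wt q C' = Wt q C1 + Wt q C2" using pair_weight[OF T0 C12(3) v1(2) v1(1) v2(2) v2(1)] C12(4) by simp
    moreover have "2 * w = w + w" by (simp add: mult_2)
    ultimately have "Wt q C' \<le> 2 * w" using w1 w2 by (simp add: add_mono)
    moreover have "a \<notin> C'" using a1 a2 C12(4) by simp
    ultimately show "C' \<noteq> {} \<and> (\<exists>P. length P = T - 1 \<and> under c' P = C') \<and> Wt q C' \<le> 2 * w \<and> a \<notin> C'" using a b by blast
  qed
  have "length (c' a) = length (c a)" using L' by blast
  then have len': "T - 1 < length (c' a) + h" using Suc.prems(5) Tpos by simp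
  have "ennreal (TDGD q a) \<le> 2^h * (2 * w)" by (rule Suc.IH[OF O' fin' card' P2 len'])
  then show ?case by (simp add: mult.assoc mult.commute mult.left_commute)
qed




lemma final_real:
  fixes q :: real and l d :: nat
  assumes q: "0 < q" "q < 1" and l: "l \<ge> 2"
    and r1: "(2::real)^(l-1) * q^d \<le> 1" and r2: "1 \<le> (2::real)^(l+1) * q^d"
  shows "(real l - 2) / log 2 (1/q) \<le> real d \<and> real d \<le> (real l + 1) / log 2 (1/q)"
proof -
  define Lq where "Lq = log 2 (1/q)"
  have Lqpos: "0 < Lq" unfolding Lq_def using q by simp
  have lq: "log 2 q = - Lq" unfolding Lq_def using q by (simp add: log_divide)
  have e1: "log 2 ((2::real)^(l-1) * q^d) = real (l-1) - real d * Lq"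
    using q lq by (simp add: log_mult log_nat_power)
  have e2: "log 2 ((2::real)^(l+1) * q^d) = real (l+1) - real d * Lq"
    using q lq by (simp add: log_mult log_nat_power)
  have "log 2 ((2::real)^(l-1) * q^d) \<le> log 2 1"
    using r1 q by (subst log_le_cancel_iff) auto
  then have a: "real (l-1) \<le> real d * Lq" using e1 by simp
  have "log 2 1 \<le> log 2 ((2::real)^(l+1) * q^d)"
    using r2 q by (subst log_le_cancel_iff) auto
  then have b: "real d * Lq \<le> real (l+1)" using e2 by simp
  have a': "real l - 2 \<le> real d * Lq" using a l by (simp add: of_nat_diff)
  have "(real l - 2) / Lq \<le> real d" using a' Lqpos by (simp add: divide_le_eq)
  moreover have "real d \<le> (real l + 1) / Lq" using b Lqpos by (simp add: le_divide_eq)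
  ultimately show ?thesis unfolding Lq_def by simp
qed

lemma ennreal_pow2_mult: "x \<ge> 0 \<Longrightarrow> (2::ennreal)^n * ennreal x = ennreal ((2::real)^n * x)"
  by (simp add: ennreal_mult ennreal_power[symmetric])

theorem lemma3:
  fixes q :: real and c :: "nat \<times> nat \<Rightarrow> bool list" and L :: "nat \<Rightarrow> nat"
    and s s' l :: nat
  assumes "0 < q" and "q < 1"
    and "optimal_tree q c"
    and "majority_level c L"
    and "l \<ge> 2" and "s \<ge> 2^(l+2) - 1"
    and "s' > s" and "L s' = L s + l"
  shows "(real l - 2) / log 2 (1/q) \<le> real s' - real s
       \<and> real s' - real s \<le> (real l + 1) / log 2 (1/q)"
proof -
  have q: "0 < q" "q < 1" using assms by auto
  have T0: "is_prefix_code_tree c" using assms(3) by (simp add: optimal_tree_def)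
  have "expected_length q c \<le> expected_length q c0" using assms(3) c0_tree by (simp add: optimal_tree_def)
  then have fin: "expected_length q c < \<infinity>" using c0_finite[OF q] by (meson le_less_trans)
  have O: "opt q c" using assms(3) fin by (simp add: opt_def)
  define B where "B = {(i,j). i + j = s' \<and> length (c (i,j)) = L s'}"
  define A where "A = {(i,j). i + j = s \<and> length (c (i,j)) = L s}"
  have mB: "2 * card B \<ge> s' + 1" using assms(4) unfolding majority_level_def B_def by blast
  have mA: "2 * card A \<ge> s + 1" using assms(4) unfolding majority_level_def A_def by blast
  have finB: "finite B"
    by (rule finite_subset[of _ "{..s'} \<times> {..s'}"]) (auto simp: B_def)
  have finA: "finite A"
    by (rule finite_subset[of _ "{..s} \<times> {..s}"]) (auto simp: A_def)
  have p1: "(1::nat) \<le> 2^(l+2)" by simp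
  have "s + 1 \<ge> 2^(l+2)" using assms(6) p1 by linarith
  then have "s' \<ge> 2^(l+2)" using assms(7) by linarith
  moreover have "(2::nat)^(l+2) = 2 * 2^(l+1)" by simp
  ultimately have cardB: "card B \<ge> 2^(l+1)" using mB by linarith
  have "card A > 0" using mA by linarith
  then have "A \<noteq> {}" by auto
  then obtain a0 where a0: "a0 \<in> A" by blast
  obtain i0 j0 where a0p: "a0 = (i0, j0)" by (cases a0)
  have a0s: "i0 + j0 = s" and a0l: "length (c a0) = L s" using a0 a0p by (auto simp: A_def)
  define P where "P = (1 - q)^2 * q^s"
  define P' where "P' = (1 - q)^2 * q^s'"
  have Ppos: "P \<ge> 0" "P' \<ge> 0" using q by (auto simp: P_def P'_def)
  have TPa: "TDGD q a0 = P" using a0p a0s by (simp add: TDGD_def P_def)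
  have TPb: "\<And>b. b \<in> B \<Longrightarrow> TDGD q b = P'" by (auto simp: B_def TDGD_def P'_def)
  define \<C> where "\<C> = (\<lambda>b. {b}) ` B"
  have finC: "finite \<C>" using finB by (simp add: \<C>_def)
  have cardC: "card \<C> = card B" unfolding \<C>_def by (rule card_image) (auto simp: inj_on_def)
  have realC: "\<forall>C\<in>\<C>. C \<noteq> {} \<and> (\<exists>v. length v = L s' \<and> under c v = C) \<and> Wt q C = ennreal P' \<and> a0 \<notin> C"
  proof
    fix C assume "C \<in> \<C>"
    then obtain b where b: "b \<in> B" "C = {b}" by (auto simp: \<C>_def)
    obtain i j where bp: "b = (i,j)" by (cases b)
    have "length (c b) = L s'" "i + j = s'" using b bp by (auto simp: B_def)
    moreover have "under c (c b) = {b}" by (rule under_leaf[OF T0])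
    moreover have "Wt q {b} = ennreal P'" using Wt_single TPb[OF b(1)] by simp
    moreover have "a0 \<noteq> b" using a0p bp a0s \<open>i + j = s'\<close> assms(7) by auto
    ultimately show "C \<noteq> {} \<and> (\<exists>v. length v = L s' \<and> under c v = C) \<and> Wt q C = ennreal P' \<and> a0 \<notin> C"
      using b by auto
  qed
  have "(2::nat)^(l-1) \<le> 2^(l+1)" by (rule power_increasing) auto
  then have cl: "2^(l-1) \<le> card \<C>" using cardB cardC by linarith
  have rl: "\<forall>C\<in>\<C>. C \<noteq> {} \<and> (\<exists>v. length v = L s' \<and> under c v = C) \<and> ennreal P' \<le> Wt q C"
    using realC by auto
  have ll: "length (c a0) + (l - 1) < L s'" using a0l assms(5,8) by simp
  have low: "2^(l-1) * ennreal P' \<le> ennreal (TDGD q a0)" by (rule lower[OF q O finC cl rl ll])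
  have cu: "2^(l+1) \<le> card \<C>" using cardB cardC by linarith
  have ru: "\<forall>C\<in>\<C>. C \<noteq> {} \<and> (\<exists>v. length v = L s' \<and> under c v = C) \<and> Wt q C \<le> ennreal P' \<and> a0 \<notin> C"
    using realC by auto
  have lu: "L s' < length (c a0) + (l + 1)" using a0l assms(8) by simp
  have upp: "ennreal (TDGD q a0) \<le> 2^(l+1) * ennreal P'" by (rule upper[OF q O finC cu ru lu])
  have R1: "(2::real)^(l-1) * P' \<le> P"
    using low TPa Ppos ennreal_pow2_mult[of P' "l-1"] by (simp add: ennreal_le_iff)
  have R2: "P \<le> (2::real)^(l+1) * P'"
    using upp TPa Ppos ennreal_pow2_mult[of P' "l+1"] by (simp add: ennreal_le_iff)
  define d where "d = s' - s"
  have s'd: "s' = s + d" using assms(7) d_def by simp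
  have pos: "0 < (1 - q)^2 * q^s" using q by simp
  have P'eq: "P' = ((1 - q)^2 * q^s) * q^d" unfolding P'_def s'd by (simp add: power_add)
  have Peq: "P = ((1 - q)^2 * q^s) * 1" unfolding P_def by simp
  have r1: "(2::real)^(l-1) * q^d \<le> 1"
  proof -
    have "((1 - q)^2 * q^s) * ((2::real)^(l-1) * q^d) \<le> ((1 - q)^2 * q^s) * 1"
      using R1 P'eq Peq by (simp add: algebra_simps)
    then show ?thesis using mult_le_cancel_left_pos[OF pos, of "(2::real)^(l-1) * q^d" 1] by simp
  qed
  have r2: "1 \<le> (2::real)^(l+1) * q^d"
  proof -
    have "((1 - q)^2 * q^s) * 1 \<le> ((1 - q)^2 * q^s) * ((2::real)^(l+1) * q^d)"
      using R2 P'eq Peq by (simp add: algebra_simps)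
    then show ?thesis using mult_le_cancel_left_pos[OF pos, of 1 "(2::real)^(l+1) * q^d"] by simp
  qed
  have "real s' - real s = real d" using s'd by simp
  then show ?thesis using final_real[OF q assms(5) r1 r2] by simp
qed


end
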